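(* For $0<h\le i\le n$ and any pair $(d,p)\in DP_i$: if $dp(h,i)>(d,p)$, then $dp(h-1,i)\ge(d,p)$.
   Context: Let $x_0\le x_1\le\cdots\le x_{n+1}$ be real numbers, $\{x\}=x-\lfloor x\rfloor$, and let $\pi=(\pi_0,\dots,\pi_{n+1})$ be the permutation of $\{0,\dots,n+1\}$ such that for $0\le i<j\le n+1$, $\pi_i>\pi_j$ iff $(\{x_i\},-x_i,i)<(\{x_j\},-x_j,j)$ lexicographically. For a sequence of indices $s_0<\cdots<s_k$, a drop is a consecutive pair $(s_{h-1},s_h)$ with $\pi_{s_{h-1}}>\pi_{s_h}$. For $0\le h\le i\le n$, $dp(h,i)$ is the pair $(d(h,i),p(h,i))$, where $d(h,i)$ is the minimum number of drops over all sequences of $h+1$ indices $0=s_0<s_1<\cdots<s_h\le i$, and $p(h,i)$ is the minimum of $\pi_{s_h}$ over all such sequences having exactly $d(h,i)$ drops. Let $DP_i=\{dp(h,i)\mid 0\le h\le i\}$. Pairs are compared lexicographically. *)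

theory Defs
  imports Complex_Main "HOL-Library.Product_Lexorder"
begin

definition key :: "(nat \<Rightarrow> real) \<Rightarrow> nat \<Rightarrow> real \<times> real \<times> nat" where
  "key x i = (frac (x i), - x i, i)"

definition is_pi :: "(nat \<Rightarrow> real) \<Rightarrow> nat \<Rightarrow> (nat \<Rightarrow> nat) \<Rightarrow> bool" where
  "is_pi x n \<sigma> \<longleftrightarrow> bij_betw \<sigma> {0..n+1} {0..n+1} \<and>
     (\<forall>i j. i < j \<and> j \<le> n + 1 \<longrightarrow> (\<sigma> i > \<sigma> j \<longleftrightarrow> key x i < key x j))"

definition valid_seq :: "nat \<Rightarrow> nat \<Rightarrow> (nat \<Rightarrow> nat) \<Rightarrow> bool" where
  "valid_seq h i s \<longleftrightarrow> s 0 = 0 \<and> (\<forall>k. 1 \<le> k \<and> k \<le> h \<longrightarrow> s (k - 1) < s k) \<and> s h \<le> i"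

definition drops :: "(nat \<Rightarrow> nat) \<Rightarrow> nat \<Rightarrow> (nat \<Rightarrow> nat) \<Rightarrow> nat" where
  "drops \<sigma> h s = card {k. 1 \<le> k \<and> k \<le> h \<and> \<sigma> (s (k - 1)) > \<sigma> (s k)}"

definition dd :: "(nat \<Rightarrow> nat) \<Rightarrow> nat \<Rightarrow> nat \<Rightarrow> nat" where
  "dd \<sigma> h i = Min {drops \<sigma> h s | s. valid_seq h i s}"

definition pp :: "(nat \<Rightarrow> nat) \<Rightarrow> nat \<Rightarrow> nat \<Rightarrow> nat" where
  "pp \<sigma> h i = Min {\<sigma> (s h) | s. valid_seq h i s \<and> drops \<sigma> h s = dd \<sigma> h i}"

definition dp :: "(nat \<Rightarrow> nat) \<Rightarrow> nat \<Rightarrow> nat \<Rightarrow> nat \<times> nat" where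
  "dp \<sigma> h i = (dd \<sigma> h i, pp \<sigma> h i)"

definition DP :: "(nat \<Rightarrow> nat) \<Rightarrow> nat \<Rightarrow> (nat \<times> nat) set" where
  "DP \<sigma> i = {dp \<sigma> h i | h. h \<le> i}"

end

theory Submission
  imports Defs
begin

lemma drops_fin: fixes \<sigma> s :: "nat \<Rightarrow> nat" shows "finite {k. 1 \<le> k \<and> k \<le> h \<and> \<sigma> (s (k - 1)) > (\<sigma> (s k)::nat)}"
  by (rule finite_subset[of _ "{..h}"]) auto

lemma drops_le: fixes \<sigma> s :: "nat \<Rightarrow> nat" shows "drops \<sigma> h s \<le> h"
proof -
  have "drops \<sigma> h s \<le> card {1..h}" unfolding drops_def
    by (rule card_mono) auto
  thus ?thesis by simp
qed

lemma fin_dd: fixes \<sigma> :: "nat \<Rightarrow> nat" shows "finite {drops \<sigma> h s | s. valid_seq h i s}"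
  by (rule finite_subset[of _ "{..h}"]) (auto simp: drops_le)

lemma fin_pp: fixes \<sigma> :: "nat \<Rightarrow> nat" shows "finite {\<sigma> (s h) | s. valid_seq h i s \<and> drops \<sigma> h s = dd \<sigma> h i}"
  by (rule finite_subset[of _ "\<sigma> ` {..i}"]) (auto simp: valid_seq_def)

lemma L1:
  fixes \<sigma> s :: "nat \<Rightarrow> nat"
  assumes "valid_seq h i s"
  shows "dp \<sigma> h i \<le> (drops \<sigma> h s, \<sigma> (s h))"
proof -
  have a: "dd \<sigma> h i \<le> drops \<sigma> h s" unfolding dd_def
    by (rule Min_le[OF fin_dd]) (use assms in blast)
  have b: "pp \<sigma> h i \<le> \<sigma> (s h)" if "drops \<sigma> h s = dd \<sigma> h i"
    unfolding pp_def by (rule Min_le[OF fin_pp]) (use assms that in blast)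
  show ?thesis using a b unfolding dp_def less_eq_prod_def
    by (cases "drops \<sigma> h s = dd \<sigma> h i") auto
qed

lemma L2:
  fixes \<sigma> s :: "nat \<Rightarrow> nat"
  assumes "h \<le> i"
  shows "\<exists>s. valid_seq h i s \<and> drops \<sigma> h s = dd \<sigma> h i \<and> \<sigma> (s h) = pp \<sigma> h i"
proof -
  have v: "valid_seq h i id" using assms by (auto simp: valid_seq_def)
  have "dd \<sigma> h i \<in> {drops \<sigma> h s | s. valid_seq h i s}" unfolding dd_def
    by (rule Min_in[OF fin_dd]) (use v in blast)
  then have ne: "{\<sigma> (s h) | s. valid_seq h i s \<and> drops \<sigma> h s = dd \<sigma> h i} \<noteq> {}" by auto
  have "pp \<sigma> h i \<in> {\<sigma> (s h) | s. valid_seq h i s \<and> drops \<sigma> h s = dd \<sigma> h i}" unfolding pp_def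
    by (rule Min_in[OF fin_pp ne])
  thus ?thesis by force
qed

lemma chain_nodrop:
  fixes \<sigma> s :: "nat \<Rightarrow> nat"
  assumes "\<forall>m. a < m \<and> m \<le> b \<longrightarrow> \<not> (\<sigma> (s (m - 1)) > (\<sigma> (s m)::nat))" "a \<le> c" "c \<le> b"
  shows "\<sigma> (s a) \<le> \<sigma> (s c)"
  using assms(2,3)
proof (induction c rule: dec_induct)
  case base then show ?case by simp
next
  case (step j)
  have "a < Suc j" "Suc j \<le> b" using step assms(3) by auto
  then have "\<not> \<sigma> (s (Suc j - 1)) > \<sigma> (s (Suc j))" using assms(1) by blast
  then show ?case using step by simp
qed

lemma L3:
  fixes \<sigma> s :: "nat \<Rightarrow> nat"
  assumes "valid_seq k i s" "1 \<le> h" "h \<le> k"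
  shows "\<exists>t. valid_seq h i t \<and> drops \<sigma> h t \<le> drops \<sigma> k s \<and> t h = s k"
proof -
  define t where "t j = (if j < h then s j else s k)" for j
  have sm: "s a < s b" if "a < b" "b \<le> k" for a b
    using that
  proof (induction b)
    case 0 then show ?case by simp
  next
    case (Suc b)
    have st: "s b < s (Suc b)" using assms(1) Suc.prems unfolding valid_seq_def
      by (metis diff_Suc_1 le_add1 plus_1_eq_Suc)
    show ?case
    proof (cases "a = b")
      case True then show ?thesis using st by simp
    next
      case False then show ?thesis using Suc st by simp
    qed
  qed
  have vt: "valid_seq h i t"
    using assms sm unfolding valid_seq_def t_def
    by (auto simp: not_less)
  let ?Dt = "{j. 1 \<le> j \<and> j \<le> h \<and> \<sigma> (t (j - 1)) > \<sigma> (t j)}"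
  let ?Ds = "{j. 1 \<le> j \<and> j \<le> k \<and> \<sigma> (s (j - 1)) > \<sigma> (s j)}"
  obtain m where m: "h \<le> m" "m \<le> k" "\<sigma> (s (h - 1)) > \<sigma> (s k) \<longrightarrow> m \<in> ?Ds"
  proof (cases "\<sigma> (s (h - 1)) > \<sigma> (s k)")
    case True
    have "\<exists>m. h - 1 < m \<and> m \<le> k \<and> \<sigma> (s (m - 1)) > \<sigma> (s m)"
    proof (rule ccontr)
      assume "\<not> ?thesis"
      then have "\<sigma> (s (h - 1)) \<le> \<sigma> (s k)"
        using chain_nodrop[of "h - 1" k \<sigma> s k] assms by auto
      then show False using True by simp
    qed
    then obtain m where "h - 1 < m" "m \<le> k" "\<sigma> (s (m - 1)) > \<sigma> (s m)" by blast
    then show ?thesis using that[of m] assms by auto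
  next
    case False then show ?thesis using that[of h] assms by auto
  qed
  define f where "f j = (if j < h then j else m)" for j
  have inj: "inj_on f ?Dt" unfolding inj_on_def f_def using m by auto
  have sub: "f ` ?Dt \<subseteq> ?Ds"
  proof
    fix y assume "y \<in> f ` ?Dt"
    then obtain j where j: "j \<in> ?Dt" "y = f j" by blast
    show "y \<in> ?Ds"
    proof (cases "j < h")
      case True
      then have "t (j - 1) = s (j - 1)" "t j = s j" "f j = j" unfolding t_def f_def by auto
      then show ?thesis using j assms True by auto
    next
      case False
      then have "j = h" using j by auto
      have "t (h - 1) = s (h - 1)" "t h = s k" "f h = m" using assms(2) unfolding t_def f_def by auto
      then have "\<sigma> (s (h - 1)) > \<sigma> (s k)" "y = m" using j \<open>j = h\<close> by auto
      then show ?thesis using m by blast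
    qed
  qed
  have "card ?Dt \<le> card ?Ds"
    by (rule card_inj_on_le[OF inj sub drops_fin[of k \<sigma> s]])
  then have "drops \<sigma> h t \<le> drops \<sigma> k s" unfolding drops_def .
  moreover have "t h = s k" unfolding t_def by simp
  ultimately show ?thesis using vt by blast
qed

lemma L4:
  fixes \<sigma> s :: "nat \<Rightarrow> nat"
  assumes "valid_seq k i s" "drops \<sigma> k s = 0"
  shows "\<sigma> 0 \<le> \<sigma> (s k)"
proof -
  have "{j. 1 \<le> j \<and> j \<le> k \<and> \<sigma> (s (j - 1)) > \<sigma> (s j)} = {}"
    using assms(2) drops_fin[of k \<sigma> s] unfolding drops_def by simp
  then have "\<forall>m. 0 < m \<and> m \<le> k \<longrightarrow> \<not> (\<sigma> (s (m - 1)) > (\<sigma> (s m)))" by auto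
  from chain_nodrop[of 0 k \<sigma> s k] this have "\<sigma> (s 0) \<le> \<sigma> (s k)" by simp
  then show ?thesis using assms(1) unfolding valid_seq_def by simp
qed

lemma M:
  fixes \<sigma> s :: "nat \<Rightarrow> nat"
  assumes "1 \<le> a" "a \<le> b" "b \<le> i"
  shows "dp \<sigma> a i \<le> dp \<sigma> b i"
proof -
  obtain s where s: "valid_seq b i s" "drops \<sigma> b s = dd \<sigma> b i" "\<sigma> (s b) = pp \<sigma> b i"
    using L2[OF assms(3)] by blast
  obtain t where t: "valid_seq a i t" "drops \<sigma> a t \<le> drops \<sigma> b s" "t a = s b"
    using L3[OF s(1) assms(1,2)] by blast
  have "dp \<sigma> a i \<le> (drops \<sigma> a t, \<sigma> (t a))" by (rule L1[OF t(1)])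
  also have "\<dots> \<le> dp \<sigma> b i" using t s unfolding dp_def less_eq_prod_def by auto
  finally show ?thesis .
qed

lemma dp0: fixes \<sigma> :: "nat \<Rightarrow> nat" shows "dp \<sigma> 0 i = (0, \<sigma> 0)"
proof -
  have v: "valid_seq 0 i s \<longleftrightarrow> s 0 = 0" for s unfolding valid_seq_def by auto
  have d: "drops \<sigma> 0 s = 0" for s unfolding drops_def by simp
  have "{drops \<sigma> 0 s | s. valid_seq 0 i s} = {0}" using v d by (auto intro: exI[of _ id])
  then have dd: "dd \<sigma> 0 i = 0" unfolding dd_def by simp
  have "{\<sigma> (s 0) | s. valid_seq 0 i s \<and> drops \<sigma> 0 s = dd \<sigma> 0 i} = {\<sigma> 0}"
    using v d dd by (auto intro: exI[of _ id])
  then have "pp \<sigma> 0 i = \<sigma> 0" unfolding pp_def by simp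
  then show ?thesis using dd unfolding dp_def by simp
qed

lemma Z:
  fixes \<sigma> s :: "nat \<Rightarrow> nat"
  assumes "a \<le> i"
  shows "dp \<sigma> 0 i \<le> dp \<sigma> a i"
proof -
  obtain s where s: "valid_seq a i s" "drops \<sigma> a s = dd \<sigma> a i" "\<sigma> (s a) = pp \<sigma> a i"
    using L2[OF assms] by blast
  show ?thesis
  proof (cases "dd \<sigma> a i = 0")
    case True
    then have "\<sigma> 0 \<le> pp \<sigma> a i" using L4[OF s(1)] s by metis
    then show ?thesis using True unfolding dp0 by (simp add: dp_def less_eq_prod_def)
  next
    case False
    then show ?thesis unfolding dp0 by (simp add: dp_def less_eq_prod_def)
  qed
qed

theorem lemma9:
  fixes x :: "nat \<Rightarrow> real" and n :: nat and \<sigma> :: "nat \<Rightarrow> nat"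
    and h i d p :: nat
  assumes "mono_on {0..n+1} x"
    and "is_pi x n \<sigma>"
    and "0 < h" and "h \<le> i" and "i \<le> n"
    and "(d, p) \<in> DP \<sigma> i"
    and "dp \<sigma> h i > (d, p)"
  shows "dp \<sigma> (h - 1) i \<ge> (d, p)"
proof -
  obtain h' where h': "h' \<le> i" "dp \<sigma> h' i = (d, p)" using assms(6) unfolding DP_def by auto
  show ?thesis
  proof (cases "h \<le> h'")
    case True
    then have "dp \<sigma> h i \<le> dp \<sigma> h' i" using M[of h h' i \<sigma>] assms h' by simp
    then show ?thesis using assms(7) h' by simp
  next
    case False
    show ?thesis
    proof (cases "h' = 0")
      case True
      then show ?thesis using Z[of "h - 1" i \<sigma>] h' assms by simp
    next
      case f: False
      then show ?thesis using M[of h' "h - 1" i \<sigma>] h' assms False by simp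
    qed
  qed
qed

end
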